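(* Let $H$ be the group defined below (with sets $A_\alpha=\{n\in\omega:\eta_\alpha(n)=1\}$), let $0\to T\to G\xrightarrow{\varphi}H\to 0$ be a balanced exact sequence with $T$ a torsion group (viewed as a subgroup of $G$), and fix elements $g_\alpha\in G$ with $\varphi(g_\alpha)=y_\alpha$ ($\alpha<\kappa$) and $\tilde x_n\in G$ with $\varphi(\tilde x_n)=x_n$ ($n\in\omega$). For $\alpha<\kappa$ and $t\in T$ let $R_{\alpha,t}=\{n\in A_\alpha : g_\alpha-t-\tilde x_n \text{ is not divisible by } p_n \text{ in } G\}$. Assume that for every $\alpha<\kappa$ there exists $t_\alpha\in T$ such that $R_{\alpha,t_\alpha}$ is finite. Then there is a homomorphism $\psi:H\to G$ with $\varphi\psi=\mathrm{id}_H$; hence the sequence splits.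
   Context: All groups are abelian. A pure subgroup $A$ of a torsion-free group $G$ is balanced if every coset $g+A$ contains an element $g+a$ ($a\in A$) whose characteristic is $\geq$ that of $g+x$ for all $x\in A$; an exact sequence $0\to A\to G\to C\to0$ is balanced exact if the image of $A$ is balanced in $G$. Setting: $\kappa$ is an uncountable cardinal, $\eta_\alpha:\omega\to 2$ ($\alpha<\kappa$) are the Cohen reals added by the forcing of finite partial functions $\kappa\times\omega\to 2$ (the lemma is considered in the generic extension). Fix primes $p_0<p_1<\cdots$; let $W=\bigoplus_{n\in\omega}\mathbb{Q}x_n\oplus\bigoplus_{\alpha<\kappa}\mathbb{Q}y_\alpha$ on independent elements, $F=\bigoplus_n\mathbb{Z}x_n\oplus\bigoplus_{\alpha<\kappa}\mathbb{Z}y_\alpha$, and $H$ the subgroup of $W$ generated by $F$ and all $p_n^{-1}(y_\alpha-x_n)$ with $\eta_\alpha(n)=1$. *)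

theory Defs
  imports Main "HOL-Library.Function_Algebras" "HOL-Library.Extended_Nat"
    "HOL-Computational_Algebra.Primes"
begin

fun nmul :: "nat \<Rightarrow> 'a::ab_group_add \<Rightarrow> 'a" where
  "nmul 0 x = 0"
| "nmul (Suc n) x = x + nmul n x"

definition divisible_by :: "nat \<Rightarrow> 'a::ab_group_add \<Rightarrow> bool" where
  "divisible_by n x \<longleftrightarrow> (\<exists>h. x = nmul n h)"

definition height :: "nat \<Rightarrow> 'a::ab_group_add \<Rightarrow> enat" where
  "height p x = Sup {enat k | k. divisible_by (p ^ k) x}"

definition char_le :: "'a::ab_group_add \<Rightarrow> 'a \<Rightarrow> bool" where
  "char_le x y \<longleftrightarrow> (\<forall>p::nat. prime p \<longrightarrow> height p x \<le> height p y)"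

definition pure_subgroup :: "'a::ab_group_add set \<Rightarrow> bool" where
  "pure_subgroup A \<longleftrightarrow>
     0 \<in> A \<and> (\<forall>a\<in>A. \<forall>b\<in>A. a + b \<in> A \<and> - a \<in> A) \<and>
     (\<forall>n>0. \<forall>a\<in>A. divisible_by n a \<longrightarrow> (\<exists>b\<in>A. a = nmul n b))"

definition balanced :: "'a::ab_group_add set \<Rightarrow> bool" where
  "balanced A \<longleftrightarrow> pure_subgroup A \<and>
     (\<forall>g. \<exists>a\<in>A. \<forall>x\<in>A. char_le (g + x) (g + a))"

text \<open>The rational vector space W, realised as functions on the index set
  nat + kappa (Inl n \<mapsto> x_n, Inr alpha \<mapsto> y_alpha), with pointwise operations.\<close>
definition xv :: "nat \<Rightarrow> (nat + 'k \<Rightarrow> rat)" where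
  "xv n = (\<lambda>i. if i = Inl n then 1 else 0)"

definition yv :: "'k \<Rightarrow> (nat + 'k \<Rightarrow> rat)" where
  "yv a = (\<lambda>i. if i = Inr a then 1 else 0)"

inductive_set Hgrp :: "('k \<Rightarrow> nat \<Rightarrow> bool) \<Rightarrow> (nat \<Rightarrow> nat) \<Rightarrow> (nat + 'k \<Rightarrow> rat) set"
  for \<eta> :: "'k \<Rightarrow> nat \<Rightarrow> bool" and p :: "nat \<Rightarrow> nat" where
  zero: "0 \<in> Hgrp \<eta> p"
| gen_x: "xv n \<in> Hgrp \<eta> p"
| gen_y: "yv a \<in> Hgrp \<eta> p"
| gen_frac: "\<eta> a n \<Longrightarrow> (\<lambda>i. (yv a i - xv n i) / of_nat (p n)) \<in> Hgrp \<eta> p"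
| add: "u \<in> Hgrp \<eta> p \<Longrightarrow> v \<in> Hgrp \<eta> p \<Longrightarrow> u + v \<in> Hgrp \<eta> p"
| neg: "u \<in> Hgrp \<eta> p \<Longrightarrow> - u \<in> Hgrp \<eta> p"

end

theory Submission imports Defs begin

lemma nmul_add: "nmul (m + n) x = nmul m x + nmul n x"
  by (induction m) (auto simp: algebra_simps)
lemma nmul_plus: "nmul n (x + y) = nmul n x + nmul n y"
  by (induction n) (auto simp: algebra_simps)
lemma nmul_zero[simp]: "nmul n 0 = 0"
  by (induction n) auto
lemma nmul_neg: "nmul n (- x) = - nmul n x"
  by (induction n) (auto simp: algebra_simps)
lemma nmul_minus: "nmul n (x - y) = nmul n x - nmul n y"
  by (metis diff_conv_add_uminus nmul_neg nmul_plus)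
lemma nmul_mult: "nmul (m * n) x = nmul m (nmul n x)"
  by (induction m) (auto simp: nmul_add nmul_plus)
lemma nmul_one[simp]: "nmul 1 x = x" by simp

lemma nmul_comm: "nmul m (nmul n x) = nmul n (nmul m x)"
  by (metis nmul_mult mult.commute)

definition zmul :: "int \<Rightarrow> 'a::ab_group_add \<Rightarrow> 'a" where
  "zmul k x = nmul (nat k) x - nmul (nat (- k)) x"

lemma zmul_repr: assumes "int m - int n = a" shows "zmul a x = nmul m x - nmul n x"
proof -
  have "nat a + n = nat (-a) + m" using assms by auto
  hence "nmul (nat a) x + nmul n x = nmul (nat (-a)) x + nmul m x"
    by (metis nmul_add)
  thus ?thesis unfolding zmul_def by (simp add: algebra_simps)
qed

lemma zmul_nat: "zmul (int n) x = nmul n x"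
  using zmul_repr[of n 0 "int n" x] by simp
lemma zmul_0[simp]: "zmul 0 x = 0" by (simp add: zmul_def)
lemma zmul_x0[simp]: "zmul k 0 = 0" by (simp add: zmul_def)

lemma int_split: "int (nat a) - int (nat (- a)) = a" by simp

lemma zmul_add: "zmul (a + b) x = zmul a x + zmul b x"
proof -
  let ?m = "nat a" and ?n = "nat (-a)" and ?m' = "nat b" and ?n' = "nat (-b)"
  have "int (?m + ?m') - int (?n + ?n') = a + b" by simp
  hence "zmul (a + b) x = nmul (?m + ?m') x - nmul (?n + ?n') x" by (rule zmul_repr)
  thus ?thesis by (simp add: zmul_def nmul_add algebra_simps)
qed

lemma zmul_neg: "zmul (- a) x = - zmul a x"
  by (simp add: zmul_def)

lemma zmul_diff: "zmul (a - b) x = zmul a x - zmul b x"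
  by (metis diff_conv_add_uminus zmul_add zmul_neg)

lemma zmul_plus: "zmul a (x + y) = zmul a x + zmul a y"
  by (simp add: zmul_def nmul_plus algebra_simps)

lemma zmul_minus: "zmul a (x - y) = zmul a x - zmul a y"
  by (simp add: zmul_def nmul_minus algebra_simps)

lemma zmul_uminus: "zmul a (- y) = - zmul a y"
  by (simp add: zmul_def nmul_neg algebra_simps)

lemma zmul_mult: "zmul (a * b) x = zmul a (zmul b x)"
proof -
  let ?m = "nat a" and ?n = "nat (-a)" and ?m' = "nat b" and ?n' = "nat (-b)"
  have "int (?m * ?m' + ?n * ?n') - int (?m * ?n' + ?n * ?m') = a * b"
    by (cases "a \<ge> 0"; cases "b \<ge> 0") (auto simp: algebra_simps)
  hence "zmul (a * b) x = nmul (?m * ?m' + ?n * ?n') x - nmul (?m * ?n' + ?n * ?m') x"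
    by (rule zmul_repr)
  thus ?thesis by (simp add: zmul_def nmul_add nmul_mult nmul_minus algebra_simps)
      (metis nmul_comm add.commute)
qed

lemma zmul_one[simp]: "zmul 1 x = x" by (simp add: zmul_def)

lemma hom_0: fixes f :: "'a::ab_group_add \<Rightarrow> 'b::ab_group_add" assumes "\<And>a b. f (a + b) = f a + f b" shows "f 0 = 0"
  using assms[of 0 0] by simp
lemma hom_neg: fixes f :: "'a::ab_group_add \<Rightarrow> 'b::ab_group_add" assumes "\<And>a b. f (a + b) = f a + f b" shows "f (- x) = - f x"
proof -
  have "f x + f (- x) = 0" using assms[of x "-x"] hom_0[OF assms] by simp
  thus ?thesis by (simp add: eq_neg_iff_add_eq_0 add.commute)
qed
lemma hom_diff: fixes f :: "'a::ab_group_add \<Rightarrow> 'b::ab_group_add" assumes "\<And>a b. f (a + b) = f a + f b" shows "f (x - y) = f x - f y"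
  using assms[of x "-y"] hom_neg[OF assms, of y] by simp
lemma hom_nmul: fixes f :: "'a::ab_group_add \<Rightarrow> 'b::ab_group_add" assumes "\<And>a b. f (a + b) = f a + f b" shows "f (nmul n x) = nmul n (f x)"
  by (induction n) (auto simp: assms hom_0[OF assms])
lemma hom_zmul: fixes f :: "'a::ab_group_add \<Rightarrow> 'b::ab_group_add" assumes "\<And>a b. f (a + b) = f a + f b" shows "f (zmul k x) = zmul k (f x)"
  by (simp add: zmul_def hom_diff[OF assms] hom_nmul[OF assms])
lemma hom_sum: fixes f :: "'a::ab_group_add \<Rightarrow> 'b::ab_group_add" assumes "\<And>a b. f (a + b) = f a + f b" shows "f (sum g S) = (\<Sum>i\<in>S. f (g i))"
  by (induction S rule: infinite_finite_induct) (auto simp: assms hom_0[OF assms])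

lemma nmul_fun: "nmul n (u :: 'i \<Rightarrow> rat) = (\<lambda>i. of_nat n * u i)"
  by (induction n) (auto simp: algebra_simps)
lemma zmul_fun: "zmul k (u :: 'i \<Rightarrow> rat) = (\<lambda>i. of_int k * u i)"
proof
  fix i
  have "rat_of_nat (nat k) - rat_of_nat (nat (- k)) = rat_of_int k"
    by (cases "k \<ge> 0") auto
  hence "rat_of_nat (nat k) * u i - rat_of_nat (nat (- k)) * u i = rat_of_int k * u i"
    by (metis left_diff_distrib)
  thus "zmul k u i = of_int k * u i" by (simp add: zmul_def nmul_fun)
qed
lemma sum_fun_app: "(sum g S :: 'i \<Rightarrow> 'b::ab_group_add) i = (\<Sum>s\<in>S. g s i)"
  by (induction S rule: infinite_finite_induct) auto


lemma zmul_int_mult: "zmul (int q * v) x = nmul q (zmul v x)"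
  by (simp add: zmul_mult zmul_nat)

lemma coprime_div:
  assumes "nmul M x = 0" "coprime M q"
  shows "divisible_by q x"
proof -
  have "coprime (int M) (int q)" using assms(2) by simp
  hence "gcd (int M) (int q) = 1" by simp
  then obtain u v where uv: "u * int M + v * int q = 1" using bezout_int by metis
  have "x = zmul (u * int M + v * int q) x" using uv by simp
  also have "\<dots> = zmul u (zmul (int M) x) + zmul (int q * v) x"
    by (simp add: zmul_add zmul_mult mult.commute)
  also have "\<dots> = nmul q (zmul v x)" using assms(1) by (simp add: zmul_nat zmul_int_mult)
  finally show ?thesis unfolding divisible_by_def by blast
qed

lemma div_0: "divisible_by q 0"
  unfolding divisible_by_def by (metis nmul_zero)
lemma div_add: "divisible_by q x \<Longrightarrow> divisible_by q y \<Longrightarrow> divisible_by q (x + y)"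
  unfolding divisible_by_def by (metis nmul_plus)
lemma div_neg: "divisible_by q x \<Longrightarrow> divisible_by q (- x)"
  unfolding divisible_by_def by (metis nmul_neg)
lemma div_diff: "divisible_by q x \<Longrightarrow> divisible_by q y \<Longrightarrow> divisible_by q (x - y)"
  by (metis diff_conv_add_uminus div_add div_neg)
lemma div_sum: "(\<And>i. i \<in> S \<Longrightarrow> divisible_by q (f i)) \<Longrightarrow> divisible_by q (sum f S)"
  by (induction S rule: infinite_finite_induct) (auto intro: div_0 div_add)

lemma fact_split: "(n::nat) > 0 \<Longrightarrow> prime P \<Longrightarrow> \<exists>j k. n = P ^ j * k \<and> \<not> P dvd k"
proof (induction n rule: less_induct)
  case (less n)
  show ?case
  proof (cases "P dvd n")
    case True
    then obtain m where m: "n = P * m" by blast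
    have "m > 0" using less.prems m by auto
    moreover have "m < n" using m less.prems prime_gt_1_nat[OF less.prems(2)] \<open>m > 0\<close> by simp
    ultimately obtain j k where "m = P ^ j * k" "\<not> P dvd k" using less by blast
    thus ?thesis using m by (metis mult.assoc power_Suc)
  next
    case False
    thus ?thesis by (metis mult_1 power_0)
  qed
qed

lemma decomp:
  fixes d :: "'a::ab_group_add"
  assumes "nmul N d = 0" "N > 0" "prime P"
  shows "\<exists>k::int. (\<forall>q. prime q \<and> q \<noteq> P \<longrightarrow> divisible_by q (zmul k d)) \<and> divisible_by P (d - zmul k d)"
proof -
  have "P * N > 0" using assms prime_gt_0_nat by auto
  then obtain j k where jk: "P * N = P ^ j * k" "\<not> P dvd k" using fact_split assms(3) by blast
  have "j \<noteq> 0" using jk by (metis dvd_triv_left mult_1 power_0)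
  have "coprime P k" using jk(2) assms(3) by (simp add: prime_imp_coprime)
  hence "coprime (P ^ j) k" by simp
  hence "coprime (int (P ^ j)) (int k)" by simp
  hence "gcd (int (P ^ j)) (int k) = 1" by simp
  then obtain a b where ab: "a * int (P ^ j) + b * int k = 1" using bezout_int by metis
  have N0: "nmul (P * N) d = 0" using assms(1) by (simp add: nmul_mult nmul_comm[of P N])
  have e0: "nmul (P ^ j) (zmul (b * int k) d) = 0"
  proof -
    have "nmul (P ^ j) (zmul (b * int k) d) = zmul (int (P ^ j) * (b * int k)) d"
      by (metis zmul_int_mult)
    also have "\<dots> = zmul b (zmul (int (P * N)) d)" using jk(1)
      by (metis (no_types, lifting) mult.commute mult.left_commute of_nat_mult zmul_mult)
    also have "\<dots> = 0" using N0 by (metis zmul_nat zmul_x0)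
    finally show ?thesis .
  qed
  have "\<forall>q. prime q \<and> q \<noteq> P \<longrightarrow> divisible_by q (zmul (b * int k) d)"
  proof (intro allI impI)
    fix q assume q: "prime q \<and> q \<noteq> P"
    have "coprime P q" using q assms(3) primes_coprime by metis
    hence "coprime (P ^ j) q" by simp
    thus "divisible_by q (zmul (b * int k) d)" using coprime_div[OF e0] by blast
  qed
  moreover have "divisible_by P (d - zmul (b * int k) d)"
  proof -
    have "d - zmul (b * int k) d = zmul (a * int (P ^ j)) d"
      using ab by (metis add_diff_cancel_right' zmul_diff zmul_one)
    also have "\<dots> = zmul (int P * (a * int (P ^ (j - 1)))) d"
      using \<open>j \<noteq> 0\<close> by (metis mult.commute mult.left_commute of_nat_mult power_eq_if)
    also have "\<dots> = nmul P (zmul (a * int (P ^ (j - 1))) d)" by (rule zmul_int_mult)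
    finally show ?thesis unfolding divisible_by_def by blast
  qed
  ultimately show ?thesis by blast
qed

definition ev :: "('i \<Rightarrow> 'a::ab_group_add) \<Rightarrow> ('i \<Rightarrow> int) \<Rightarrow> 'a" where
  "ev l f = (\<Sum>i\<in>{i. f i \<noteq> 0}. zmul (f i) (l i))"

definition fs :: "('i \<Rightarrow> int) \<Rightarrow> bool" where
  "fs f \<longleftrightarrow> finite {i. f i \<noteq> 0}"

lemma ev_sup: "finite S \<Longrightarrow> {i. f i \<noteq> 0} \<subseteq> S \<Longrightarrow> ev l f = (\<Sum>i\<in>S. zmul (f i) (l i))"
  unfolding ev_def by (rule sum.mono_neutral_left) auto

lemma ev_add: assumes "fs f" "fs g" shows "ev l (\<lambda>i. f i + g i) = ev l f + ev l g"
proof -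
  let ?S = "{i. f i \<noteq> 0} \<union> {i. g i \<noteq> 0}"
  have fin: "finite ?S" using assms by (simp add: fs_def)
  have "ev l (\<lambda>i. f i + g i) = (\<Sum>i\<in>?S. zmul (f i + g i) (l i))" by (rule ev_sup[OF fin]) auto
  also have "\<dots> = (\<Sum>i\<in>?S. zmul (f i) (l i)) + (\<Sum>i\<in>?S. zmul (g i) (l i))"
    by (simp add: zmul_add sum.distrib)
  also have "\<dots> = ev l f + ev l g" using ev_sup[OF fin, of f l] ev_sup[OF fin, of g l] by auto
  finally show ?thesis .
qed

lemma ev_neg: "ev l (\<lambda>i. - f i) = - ev l f"
  unfolding ev_def by (simp add: zmul_neg sum_negf)

lemma ev_zero: "ev l (\<lambda>i. 0) = 0"
  unfolding ev_def by simp

lemma ev_single: "ev l (\<lambda>i. if i = j then k else 0) = zmul k (l j)"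
  by (subst ev_sup[of "{j}"]) auto

lemma fs_single: "fs (\<lambda>i. if i = j then k else 0)"
  unfolding fs_def by (rule finite_subset[of _ "{j}"]) auto

lemma fs_add: "fs f \<Longrightarrow> fs g \<Longrightarrow> fs (\<lambda>i. f i + g i)"
  unfolding fs_def by (rule finite_subset[of _ "{i. f i \<noteq> 0} \<union> {i. g i \<noteq> 0}"]) auto

lemma fs_neg: "fs f \<Longrightarrow> fs (\<lambda>i. - f i)"
  unfolding fs_def by simp

lemma ev_comb: assumes "fs f" "fs f'" "fs h"
  shows "ev l (\<lambda>i. (f i + f' i) + - h i) = ev l f + ev l f' - ev l h"
proof -
  have "ev l (\<lambda>i. (f i + f' i) + - h i) = ev l (\<lambda>i. f i + f' i) + ev l (\<lambda>i. - h i)"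
    by (rule ev_add[OF fs_add[OF assms(1,2)] fs_neg[OF assms(3)]])
  also have "\<dots> = ev l f + ev l f' - ev l h" by (simp add: ev_add[OF assms(1,2)] ev_neg)
  finally show ?thesis .
qed

lemma ev_cong: "(\<And>i. f i \<noteq> 0 \<Longrightarrow> l i = l' i) \<Longrightarrow> ev l f = ev l' f"
  unfolding ev_def by (rule sum.cong) auto

lemma ev_hom:
  fixes \<phi> :: "'a::ab_group_add \<Rightarrow> 'b::ab_group_add"
  assumes "\<And>a b. \<phi> (a + b) = \<phi> a + \<phi> b"
  shows "\<phi> (ev l f) = ev (\<lambda>i. \<phi> (l i)) f"
  unfolding ev_def by (simp add: hom_sum[OF assms] hom_zmul[OF assms])

lemma ev_app: "ev (l :: 'i \<Rightarrow> ('j \<Rightarrow> rat)) f x = (\<Sum>i\<in>{i. f i \<noteq> 0}. of_int (f i) * l i x)"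
  unfolding ev_def by (simp add: sum_fun_app zmul_fun)


datatype 'k gen = GX nat | GY 'k | GZ 'k nat

definition lW :: "(nat \<Rightarrow> nat) \<Rightarrow> 'k gen \<Rightarrow> (nat + 'k \<Rightarrow> rat)" where
  "lW p i = (case i of GX n \<Rightarrow> xv n | GY a \<Rightarrow> yv a
      | GZ a n \<Rightarrow> (\<lambda>j. (yv a j - xv n j) / of_nat (p n)))"

lemma step_eq:
  fixes l :: "'k gen \<Rightarrow> 'a::ab_group_add"
  assumes f: "fs f" and rel: "nmul P (l (GZ a n)) = l (GY a) - l (GX n)"
  shows "ev l (\<lambda>i. f i + (if i = GY a then k else 0) + (if i = GX n then - k else 0)
            + (if i = GZ a n then - (int P * k) else 0)) = ev l f"
proof -
  let ?f1 = "\<lambda>i. f i + (if i = GY a then k else 0)"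
  let ?f2 = "\<lambda>i. ?f1 i + (if i = GX n then - k else 0)"
  have fs1: "fs ?f1" by (rule fs_add[OF f fs_single])
  have fs2: "fs ?f2" by (rule fs_add[OF fs1 fs_single])
  have e3: "ev l (\<lambda>i. ?f2 i + (if i = GZ a n then - (int P * k) else 0))
      = ev l ?f2 + zmul (- (int P * k)) (l (GZ a n))"
    using ev_add[OF fs2 fs_single, of l "GZ a n" "- (int P * k)"] unfolding ev_single .
  have e2: "ev l ?f2 = ev l ?f1 + zmul (- k) (l (GX n))"
    using ev_add[OF fs1 fs_single, of l "GX n" "- k"] unfolding ev_single .
  have e1: "ev l ?f1 = ev l f + zmul k (l (GY a))"
    using ev_add[OF f fs_single, of l "GY a" k] unfolding ev_single .
  have e4: "zmul (k * int P) (l (GZ a n)) = zmul k (l (GY a)) - zmul k (l (GX n))"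
    unfolding zmul_mult zmul_nat rel zmul_minus ..
  show ?thesis unfolding e3 e2 e1 zmul_neg by (simp add: e4 mult.commute[of "int P" k])
qed

definition pint :: "int \<Rightarrow> rat \<Rightarrow> bool" where
  "pint P q \<longleftrightarrow> (\<exists>x y. y \<noteq> 0 \<and> coprime y P \<and> q = of_int x / of_int y)"

lemma pint_int: "pint P (of_int x)"
  unfolding pint_def by (rule exI[of _ x], rule exI[of _ 1]) simp

lemma pint_add: assumes "pint P q" "pint P r" shows "pint P (q + r)"
proof -
  obtain x y where xy: "y \<noteq> 0" "coprime y P" "q = of_int x / of_int y" using assms(1) pint_def by blast
  obtain x' y' where xy': "y' \<noteq> 0" "coprime y' P" "r = of_int x' / of_int y'" using assms(2) pint_def by blast
  have "q + r = of_int (x * y' + x' * y) / of_int (y * y')"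
    using xy xy' by (simp add: field_simps)
  moreover have "coprime (y * y') P" using xy xy' by simp
  moreover have "y * y' \<noteq> 0" using xy xy' by simp
  ultimately show ?thesis unfolding pint_def by blast
qed

lemma pint_neg: assumes "pint P q" shows "pint P (- q)"
proof -
  obtain x y where xy: "y \<noteq> 0" "coprime y P" "q = of_int x / of_int y" using assms(1) pint_def by blast
  hence "- q = of_int (- x) / of_int y" by simp
  thus ?thesis using xy unfolding pint_def by blast
qed

lemma pint_sum: "(\<And>i. i \<in> S \<Longrightarrow> pint P (g i)) \<Longrightarrow> pint P (sum g S)"
  by (induction S rule: infinite_finite_induct) (auto intro: pint_add pint_int[of P 0, simplified])

lemma pint_frac: assumes "coprime (int m) P" "m \<noteq> 0" shows "pint P (of_int c / of_nat m)"
  unfolding pint_def using assms by (intro exI[of _ c] exI[of _ "int m"]) auto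

lemma pint_dvd: assumes "prime P" "pint (int P) (of_int c / of_nat P)" shows "int P dvd c"
proof -
  obtain x y where xy: "y \<noteq> 0" "coprime y (int P)" "of_int c / of_nat P = (of_int x / of_int y :: rat)"
    using assms(2) pint_def by blast
  have P0: "P \<noteq> 0" using assms(1) by auto
  have "(of_int (c * y) :: rat) = of_int (x * int P)" using xy(1,3) P0
    by (simp add: field_simps)
  hence "c * y = x * int P" by (simp only: of_int_eq_iff)
  hence "int P dvd c * y" by simp
  moreover have "prime (int P)" using assms(1) by simp
  ultimately have "int P dvd c \<or> int P dvd y" using prime_dvd_mult_iff by blast
  moreover have "\<not> int P dvd y"
  proof
    assume "int P dvd y"
    hence "int P dvd gcd y (int P)" by simp
    hence "int P dvd 1" using xy(2) by simp
    thus False using \<open>prime (int P)\<close> by (simp add: prime_int_iff)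
  qed
  ultimately show ?thesis by blast
qed

lemma Zdiv:
  assumes pr: "\<And>n. prime (p n)" and inj: "inj p" and f: "fs f"
    and ev0: "ev (lW p) f = 0" and nz: "f (GZ a n) \<noteq> 0"
  shows "int (p n) dvd f (GZ a n)"
proof -
  let ?S = "{i. f i \<noteq> 0}"
  let ?v = "\<lambda>i. of_int (f i) * lW p i (Inr a)"
  have fin: "finite ?S" using f fs_def by blast
  have "sum ?v ?S = 0" using ev0 ev_app[of "lW p" f "Inr a"] by simp
  moreover have "GZ a n \<in> ?S" using nz by simp
  ultimately have "?v (GZ a n) + sum ?v (?S - {GZ a n}) = 0"
    using sum.remove[OF fin \<open>GZ a n \<in> ?S\<close>, of ?v] by simp
  hence eq: "?v (GZ a n) = - sum ?v (?S - {GZ a n})" by (simp add: eq_neg_iff_add_eq_0)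
  have "pint (int (p n)) (sum ?v (?S - {GZ a n}))"
  proof (rule pint_sum)
    fix i assume i: "i \<in> ?S - {GZ a n}"
    show "pint (int (p n)) (?v i)"
    proof (cases i)
      case (GX m)
      thus ?thesis using pint_int[of _ 0] by (simp add: lW_def xv_def)
    next
      case (GY b)
      thus ?thesis using pint_int[of _ "f i"] pint_int[of _ 0] by (auto simp: lW_def yv_def)
    next
      case (GZ b m)
      show ?thesis
      proof (cases "b = a")
        case False
        thus ?thesis using GZ pint_int[of _ 0] by (simp add: lW_def xv_def yv_def)
      next
        case True
        hence "m \<noteq> n" using GZ i by auto
        hence "p m \<noteq> p n" using inj by (meson injD)
        hence "coprime (p m) (p n)" using pr primes_coprime by blast
        hence cp: "coprime (int (p m)) (int (p n))" by simp
        have "?v i = of_int (f i) / of_nat (p m)" using GZ True by (simp add: lW_def xv_def yv_def)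
        thus ?thesis using pint_frac[OF cp, of "f i"] pr[of m] by (simp add: prime_gt_0_nat)
      qed
    qed
  qed
  hence "pint (int (p n)) (?v (GZ a n))" unfolding eq by (rule pint_neg)
  moreover have "?v (GZ a n) = of_int (f (GZ a n)) / of_nat (p n)"
    by (simp add: lW_def xv_def yv_def)
  ultimately show ?thesis using pint_dvd[OF pr[of n], of "f (GZ a n)"] by simp
qed


lemma lW_rel: assumes "p n \<noteq> 0" shows "nmul (p n) (lW p (GZ a n)) = lW p (GY a) - lW p (GX n)"
  using assms by (auto simp: nmul_fun lW_def)

lemma finite_Zs: "fs f \<Longrightarrow> finite {(a, n). f (GZ a n) \<noteq> 0}"
proof -
  assume "fs f"
  hence "finite ((\<lambda>(a, n). GZ a n) -` {i. f i \<noteq> 0})"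
    by (intro finite_vimageI) (auto simp: fs_def inj_on_def)
  moreover have "(\<lambda>(a, n). GZ a n) -` {i. f i \<noteq> 0} = {(a, n). f (GZ a n) \<noteq> 0}" by auto
  ultimately show ?thesis by simp
qed

lemma base_zero:
  assumes f: "fs f" and noZ: "\<And>a n. f (GZ a n) = 0" and ev0: "ev (lW p) f = 0"
  shows "f = (\<lambda>i. 0)"
proof
  fix i
  let ?S = "{i. f i \<noteq> 0}"
  show "f i = 0"
  proof (cases i)
    case (GX n)
    have "(\<Sum>j\<in>?S. of_int (f j) * lW p j (Inl n)) = 0" using ev0 ev_app[of "lW p" f "Inl n"] by simp
    moreover have "(\<Sum>j\<in>?S. of_int (f j) * lW p j (Inl n)) = (\<Sum>j\<in>?S. if j = GX n then of_int (f j) else 0)"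
    proof (rule sum.cong)
      fix j assume "j \<in> ?S"
      thus "of_int (f j) * lW p j (Inl n) = (if j = GX n then of_int (f j) else 0)"
        using noZ by (cases j) (auto simp: lW_def xv_def yv_def)
    qed simp
    ultimately have "(\<Sum>j\<in>?S. if j = GX n then (of_int (f j) :: rat) else 0) = 0" by simp
    hence "(if GX n \<in> ?S then (of_int (f (GX n)) :: rat) else 0) = 0"
      using f unfolding fs_def by (simp add: sum.delta')
    thus ?thesis using GX by (auto split: if_splits)
  next
    case (GY a)
    have "(\<Sum>j\<in>?S. of_int (f j) * lW p j (Inr a)) = 0" using ev0 ev_app[of "lW p" f "Inr a"] by simp
    moreover have "(\<Sum>j\<in>?S. of_int (f j) * lW p j (Inr a)) = (\<Sum>j\<in>?S. if j = GY a then of_int (f j) else 0)"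
    proof (rule sum.cong)
      fix j assume "j \<in> ?S"
      thus "of_int (f j) * lW p j (Inr a) = (if j = GY a then of_int (f j) else 0)"
        using noZ by (cases j) (auto simp: lW_def xv_def yv_def)
    qed simp
    ultimately have "(\<Sum>j\<in>?S. if j = GY a then (of_int (f j) :: rat) else 0) = 0" by simp
    hence "(if GY a \<in> ?S then (of_int (f (GY a)) :: rat) else 0) = 0"
      using f unfolding fs_def by (simp add: sum.delta')
    thus ?thesis using GY by (auto split: if_splits)
  next
    case (GZ a n)
    thus ?thesis using noZ by simp
  qed
qed

lemma key:
  fixes lG :: "'k gen \<Rightarrow> 'g::ab_group_add"
  assumes pr: "\<And>n. prime (p n)" and inj: "inj p"
    and rel: "\<And>a n. \<eta> a n \<Longrightarrow> nmul (p n) (lG (GZ a n)) = lG (GY a) - lG (GX n)"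
  shows "card {(a, n). f (GZ a n) \<noteq> 0} = N \<Longrightarrow> fs f \<Longrightarrow> (\<forall>a n. f (GZ a n) \<noteq> 0 \<longrightarrow> \<eta> a n)
     \<Longrightarrow> ev (lW p) f = 0 \<Longrightarrow> ev lG f = 0"
proof (induction N arbitrary: f)
  case 0
  hence "{(a, n). f (GZ a n) \<noteq> 0} = {}" using finite_Zs by (metis card_0_eq)
  hence "\<And>a n. f (GZ a n) = 0" by auto
  hence "f = (\<lambda>i. 0)" using base_zero 0 by blast
  thus ?case by (simp add: ev_zero)
next
  case (Suc N)
  let ?Z = "{(a, n). f (GZ a n) \<noteq> 0}"
  have "?Z \<noteq> {}" using Suc.prems(1) by (metis card.empty nat.simps(3))
  then obtain a n where an: "f (GZ a n) \<noteq> 0" by auto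
  have eta: "\<eta> a n" using an Suc.prems(3) by blast
  have "int (p n) dvd f (GZ a n)" using Zdiv[OF pr inj Suc.prems(2) Suc.prems(4) an] .
  then obtain k where k: "f (GZ a n) = int (p n) * k" by blast
  define f' where "f' = (\<lambda>i. f i + (if i = GY a then k else 0) + (if i = GX n then - k else 0)
            + (if i = GZ a n then - (int (p n) * k) else 0))"
  have p0: "p n \<noteq> 0" using pr[of n] by auto
  have evG: "ev lG f' = ev lG f" unfolding f'_def by (rule step_eq[OF Suc.prems(2) rel[OF eta]])
  have evW: "ev (lW p) f' = ev (lW p) f" unfolding f'_def by (rule step_eq[OF Suc.prems(2) lW_rel[of p n a, OF p0]])
  have fz: "\<And>b m. f' (GZ b m) = (if (b, m) = (a, n) then 0 else f (GZ b m))"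
    unfolding f'_def using k by auto
  have Z': "{(b, m). f' (GZ b m) \<noteq> 0} = ?Z - {(a, n)}"
    using fz by auto
  have "card {(b, m). f' (GZ b m) \<noteq> 0} = N"
    unfolding Z' using Suc.prems(1) an finite_Zs[OF Suc.prems(2)] by simp
  moreover have "fs f'"
    unfolding f'_def by (intro fs_add Suc.prems(2) fs_single)
  moreover have "\<forall>b m. f' (GZ b m) \<noteq> 0 \<longrightarrow> \<eta> b m" using fz Suc.prems(3) by auto
  moreover have "ev (lW p) f' = 0" using evW Suc.prems(4) by (simp only:)
  ultimately have "ev lG f' = 0" using Suc.IH by blast
  thus ?case using evG by simp
qed


theorem lemma4p6:
  fixes \<eta> :: "'k \<Rightarrow> nat \<Rightarrow> bool"
    and p :: "nat \<Rightarrow> nat"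
    and T :: "'g::ab_group_add set"
    and \<phi> :: "'g \<Rightarrow> (nat + 'k \<Rightarrow> rat)"
    and g :: "'k \<Rightarrow> 'g"
    and xt :: "nat \<Rightarrow> 'g"
  assumes kappa: "uncountable (UNIV :: 'k set)"
    and primes: "\<And>n. prime (p n)" and incr: "strict_mono p"
    and hom: "\<And>a b. \<phi> (a + b) = \<phi> a + \<phi> b"
    and onto: "range \<phi> = Hgrp \<eta> p"
    and kernel: "{a. \<phi> a = 0} = T"
    and torsion: "\<forall>t\<in>T. \<exists>n>0. nmul n t = 0"
    and bal: "balanced T"
    and lift_y: "\<And>a. \<phi> (g a) = yv a"
    and lift_x: "\<And>n. \<phi> (xt n) = xv n"
    and fin: "\<forall>a. \<exists>t\<in>T. finite {n. \<eta> a n \<and> \<not> divisible_by (p n) (g a - t - xt n)}"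
  shows "\<exists>\<psi> :: (nat + 'k \<Rightarrow> rat) \<Rightarrow> 'g.
           (\<forall>u\<in>Hgrp \<eta> p. \<forall>v\<in>Hgrp \<eta> p. \<psi> (u + v) = \<psi> u + \<psi> v) \<and>
           (\<forall>u\<in>Hgrp \<eta> p. \<phi> (\<psi> u) = u)"
proof -
  have inj: "inj p" using incr strict_mono_imp_inj_on by blast
  have inT: "\<And>x. x \<in> T \<longleftrightarrow> \<phi> x = 0" using kernel by blast
  have A: "\<forall>a. \<exists>tt. \<phi> tt = 0 \<and> (\<forall>n. \<eta> a n \<longrightarrow> divisible_by (p n) (g a - tt - xt n))"
  proof
    fix a
    obtain t where t: "t \<in> T" and Rfin: "finite {n. \<eta> a n \<and> \<not> divisible_by (p n) (g a - t - xt n)}"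
      using fin by blast
    define R where "R = {n. \<eta> a n \<and> \<not> divisible_by (p n) (g a - t - xt n)}"
    have E: "\<forall>n\<in>R. \<exists>e. \<phi> e = 0 \<and> divisible_by (p n) (g a - t - xt n + e)
                 \<and> (\<forall>q. prime q \<and> q \<noteq> p n \<longrightarrow> divisible_by q e)"
    proof
      fix n assume "n \<in> R"
      hence eta: "\<eta> a n" unfolding R_def by blast
      have "(\<lambda>j. (yv a j - xv n j) / of_nat (p n)) \<in> Hgrp \<eta> p" using eta by (rule Hgrp.gen_frac)
      then obtain z where z: "\<phi> z = (\<lambda>j. (yv a j - xv n j) / of_nat (p n))" using onto by (metis imageE)
      define d where "d = nmul (p n) z - (g a - t - xt n)"
      have p0: "p n \<noteq> 0" using primes[of n] by auto
      have "\<phi> (nmul (p n) z) = yv a - xv n"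
        using p0 by (simp add: hom_nmul[OF hom] z nmul_fun fun_eq_iff)
      moreover have "\<phi> (g a - t - xt n) = yv a - xv n"
        using t inT by (simp add: hom_diff[OF hom] lift_y lift_x)
      ultimately have "\<phi> d = 0" unfolding d_def by (simp add: hom_diff[OF hom])
      hence "d \<in> T" using inT by blast
      then obtain N where N: "N > 0" "nmul N d = 0" using torsion by blast
      obtain k where k: "\<forall>q. prime q \<and> q \<noteq> p n \<longrightarrow> divisible_by q (zmul k d)"
        "divisible_by (p n) (d - zmul k d)" using decomp[OF N(2) N(1) primes[of n]] by blast
      have "\<phi> (zmul k d) = 0" using \<open>\<phi> d = 0\<close> hom_zmul[OF hom, of k d] zmul_x0 by metis
      moreover have "g a - t - xt n + zmul k d = nmul (p n) z - (d - zmul k d)"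
        unfolding d_def by (simp add: algebra_simps)
      moreover have "divisible_by (p n) (nmul (p n) z)" unfolding divisible_by_def by blast
      ultimately show "\<exists>e. \<phi> e = 0 \<and> divisible_by (p n) (g a - t - xt n + e)
                 \<and> (\<forall>q. prime q \<and> q \<noteq> p n \<longrightarrow> divisible_by q e)"
        using k by (metis div_diff)
    qed
    then obtain e where e: "\<And>n. n \<in> R \<Longrightarrow> \<phi> (e n) = 0 \<and> divisible_by (p n) (g a - t - xt n + e n)
                 \<and> (\<forall>q. prime q \<and> q \<noteq> p n \<longrightarrow> divisible_by q (e n))"
      by metis
    define tt where "tt = t - sum e R"
    have "\<phi> tt = 0" unfolding tt_def using t inT e
      by (simp add: hom_diff[OF hom] hom_sum[OF hom])
    moreover have "divisible_by (p n) (g a - tt - xt n)" if eta: "\<eta> a n" for n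
    proof -
      have oth: "divisible_by (p n) (sum e (R - {n}))"
      proof (rule div_sum)
        fix m assume m: "m \<in> R - {n}"
        hence "p n \<noteq> p m" using inj by (metis DiffE injD singletonI)
        thus "divisible_by (p n) (e m)" using e[of m] m primes[of n] by blast
      qed
      show ?thesis
      proof (cases "n \<in> R")
        case True
        have "g a - tt - xt n = (g a - t - xt n + e n) + sum e (R - {n})"
          unfolding tt_def using sum.remove[OF Rfin[folded R_def] True, of e] by (simp add: algebra_simps)
        thus ?thesis using e[OF True] oth div_add by metis
      next
        case False
        hence "divisible_by (p n) (g a - t - xt n)" using eta unfolding R_def by blast
        moreover have "sum e R = sum e (R - {n})" using False by simp
        moreover have "g a - tt - xt n = (g a - t - xt n) + sum e R"
          unfolding tt_def by (simp add: algebra_simps)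
        ultimately show ?thesis using oth div_add by metis
      qed
    qed
    ultimately show "\<exists>tt. \<phi> tt = 0 \<and> (\<forall>n. \<eta> a n \<longrightarrow> divisible_by (p n) (g a - tt - xt n))"
      by blast
  qed
  then obtain tt where tt: "\<And>a. \<phi> (tt a) = 0"
    "\<And>a n. \<eta> a n \<Longrightarrow> divisible_by (p n) (g a - tt a - xt n)" by metis
  have "\<forall>a n. \<exists>h. \<eta> a n \<longrightarrow> g a - tt a - xt n = nmul (p n) h"
    using tt(2) unfolding divisible_by_def by blast
  then obtain w where w: "\<And>a n. \<eta> a n \<Longrightarrow> g a - tt a - xt n = nmul (p n) (w a n)" by metis
  define lG where "lG i = (case i of GX n \<Rightarrow> xt n | GY a \<Rightarrow> g a - tt a | GZ a n \<Rightarrow> w a n)" for i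
  have rel: "\<And>a n. \<eta> a n \<Longrightarrow> nmul (p n) (lG (GZ a n)) = lG (GY a) - lG (GX n)"
    unfolding lG_def using w by simp
  have phil: "\<phi> (lG i) = lW p i" if v: "\<And>a n. i = GZ a n \<Longrightarrow> \<eta> a n" for i
  proof (cases i)
    case (GX n) thus ?thesis by (simp add: lG_def lW_def lift_x)
  next
    case (GY a) thus ?thesis by (simp add: lG_def lW_def lift_y hom_diff[OF hom] tt(1) fun_eq_iff)
  next
    case (GZ a n)
    hence eta: "\<eta> a n" using v by blast
    have p0: "p n \<noteq> 0" using primes[of n] by auto
    have "nmul (p n) (\<phi> (w a n)) = yv a - xv n"
      using w[OF eta] by (metis hom_nmul[OF hom] hom_diff[OF hom] lift_x lift_y tt(1) diff_zero)
    hence "\<And>j. of_nat (p n) * \<phi> (w a n) j = yv a j - xv n j" by (simp add: nmul_fun fun_eq_iff)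
    hence "\<And>j. \<phi> (w a n) j = (yv a j - xv n j) / of_nat (p n)" using p0 by (simp add: field_simps)
    thus ?thesis using GZ by (simp add: lG_def lW_def fun_eq_iff)
  qed
  define Rep where "Rep u f \<longleftrightarrow> fs f \<and> (\<forall>a n. f (GZ a n) \<noteq> 0 \<longrightarrow> \<eta> a n) \<and> ev (lW p) f = u" for u f
  have rep: "\<exists>f. Rep u f" if "u \<in> Hgrp \<eta> p" for u
    using that
  proof (induction rule: Hgrp.induct)
    case zero
    show ?case unfolding Rep_def by (rule exI[of _ "\<lambda>i. 0"]) (simp add: fs_def ev_zero)
  next
    case (gen_x n)
    show ?case unfolding Rep_def
      by (rule exI[of _ "\<lambda>i. if i = GX n then 1 else 0"]) (simp add: fs_single ev_single lW_def)
  next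
    case (gen_y a)
    show ?case unfolding Rep_def
      by (rule exI[of _ "\<lambda>i. if i = GY a then 1 else 0"]) (simp add: fs_single ev_single lW_def)
  next
    case (gen_frac a n)
    show ?case unfolding Rep_def
      by (rule exI[of _ "\<lambda>i. if i = GZ a n then 1 else 0"]) (simp add: fs_single ev_single lW_def gen_frac)
  next
    case (add u v)
    then obtain f f' where f: "Rep u f" "Rep v f'" by blast
    have "Rep (u + v) (\<lambda>i. f i + f' i)"
      using f unfolding Rep_def by (auto simp: fs_add ev_add) (metis add.right_neutral add_0)
    thus ?case by blast
  next
    case (neg u)
    then obtain f where f: "Rep u f" by blast
    have "Rep (- u) (\<lambda>i. - f i)"
      using f unfolding Rep_def by (auto simp: fs_neg ev_neg)
    thus ?case by blast
  qed
  define \<psi> where "\<psi> u = ev lG (SOME f. Rep u f)" for u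
  have psi: "Rep u (SOME f. Rep u f)" if "u \<in> Hgrp \<eta> p" for u
    using rep[OF that] by (rule someI_ex)
  have "\<psi> (u + v) = \<psi> u + \<psi> v" if u: "u \<in> Hgrp \<eta> p" and v: "v \<in> Hgrp \<eta> p" for u v
  proof -
    have uv: "u + v \<in> Hgrp \<eta> p" using u v by (rule Hgrp.add)
    define f where "f = (SOME f. Rep u f)"
    define f' where "f' = (SOME f. Rep v f)"
    define h where "h = (SOME f. Rep (u + v) f)"
    have Rf: "Rep u f" "Rep v f'" "Rep (u + v) h" using psi u v uv unfolding f_def f'_def h_def by auto
    let ?D = "\<lambda>i. (f i + f' i) + - h i"
    have fsD: "fs ?D" using Rf unfolding Rep_def by (intro fs_add fs_neg) auto
    have "ev (lW p) ?D = 0"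
      using Rf unfolding Rep_def by (simp only: ev_comb) simp
    moreover have "\<forall>a n. ?D (GZ a n) \<noteq> 0 \<longrightarrow> \<eta> a n" using Rf unfolding Rep_def by force
    ultimately have "ev lG ?D = 0"
      using key[where \<eta>=\<eta> and lG=lG and f="?D", OF primes inj rel refl fsD] by blast
    hence "ev lG f + ev lG f' - ev lG h = 0"
      using Rf unfolding Rep_def by (simp only: ev_comb)
    thus ?thesis unfolding \<psi>_def f_def[symmetric] f'_def[symmetric] h_def[symmetric] by simp
  qed
  moreover have "\<phi> (\<psi> u) = u" if u: "u \<in> Hgrp \<eta> p" for u
  proof -
    have R: "Rep u (SOME f. Rep u f)" using psi[OF u] .
    have "\<phi> (\<psi> u) = ev (\<lambda>i. \<phi> (lG i)) (SOME f. Rep u f)"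
      unfolding \<psi>_def by (rule ev_hom[OF hom])
    also have "\<dots> = ev (lW p) (SOME f. Rep u f)"
      by (rule ev_cong, rule phil) (use R in \<open>auto simp: Rep_def\<close>)
    also have "\<dots> = u" using R unfolding Rep_def by blast
    finally show ?thesis .
  qed
  ultimately show ?thesis by blast
qed

end
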